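(* Let $\varphi$ be a skew-morphism of a finite group $A$ of order $n$ with power function $\pi:A\to\mathbb{Z}_n$, and let $\bar\varphi$ be the induced skew-morphism of $\bar A=A/\mathrm{Core}\,\varphi$. For any $x\in A$ the following are equivalent: (i) $x\in\mathrm{Smooth}\,\varphi$; (ii) $\pi(\varphi^i(x))=\pi(x)$ for all nonnegative integers $i$; (iii) $\bar x=x\,\mathrm{Core}\,\varphi\in\mathrm{Fix}\,\bar\varphi$.
   Context: A skew-morphism of a finite group $A$ is a permutation $\varphi$ of the set $A$ with $\varphi(1)=1$ for which there exists a function $\pi:A\to\mathbb{Z}_n$, where $n$ is the order of $\varphi$ as a permutation, such that $\varphi(xy)=\varphi(x)\varphi^{\pi(x)}(y)$ for all $x,y\in A$; $\pi$ is the power function. The kernel is $\mathrm{Ker}\,\varphi=\{x\in A:\pi(x)=1\}$ (a subgroup of $A$), and the core is $\mathrm{Core}\,\varphi=\bigcap_{i=1}^n\varphi^i(\mathrm{Ker}\,\varphi)$, a $\varphi$-invariant normal subgroup of $A$ contained in $\mathrm{Ker}\,\varphi$. For a $\varphi$-invariant normal subgroup $N$ of $A$, the induced skew-morphism $\bar\varphi$ of $A/N$ is $\bar\varphi(xN)=\varphi(x)N$, with power function $\bar\pi(xN)\equiv\pi(x)\pmod{|\bar\varphi|}$. $\mathrm{Fix}\,\psi$ denotes the set of fixed points of a permutation $\psi$. $\mathrm{Smooth}\,\varphi=\{x\in A:\varphi(x)\in x\,\mathrm{Core}\,\varphi\}$. *)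

theory Defs
  imports "HOL-Algebra.Algebra"
begin

definition perm_order :: "('a, 'b) monoid_scheme \<Rightarrow> ('a \<Rightarrow> 'a) \<Rightarrow> nat" where
  "perm_order G \<phi> = (LEAST n. 0 < n \<and> (\<forall>x\<in>carrier G. (\<phi> ^^ n) x = x))"

text \<open>Skew-morphism with power function pi; Z_n is represented by residues {0..<n}.\<close>
definition skew_morphism :: "('a, 'b) monoid_scheme \<Rightarrow> ('a \<Rightarrow> 'a) \<Rightarrow> ('a \<Rightarrow> nat) \<Rightarrow> bool" where
  "skew_morphism G \<phi> \<pi> \<longleftrightarrow>
     bij_betw \<phi> (carrier G) (carrier G) \<and> \<phi> \<one>\<^bsub>G\<^esub> = \<one>\<^bsub>G\<^esub> \<and>
     (\<forall>x\<in>carrier G. \<pi> x < perm_order G \<phi>) \<and>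
     (\<forall>x\<in>carrier G. \<forall>y\<in>carrier G. \<phi> (x \<otimes>\<^bsub>G\<^esub> y) = \<phi> x \<otimes>\<^bsub>G\<^esub> (\<phi> ^^ \<pi> x) y)"

definition skew_kernel :: "('a, 'b) monoid_scheme \<Rightarrow> ('a \<Rightarrow> 'a) \<Rightarrow> ('a \<Rightarrow> nat) \<Rightarrow> 'a set" where
  "skew_kernel G \<phi> \<pi> = {x \<in> carrier G. \<pi> x = 1 mod perm_order G \<phi>}"

definition skew_core :: "('a, 'b) monoid_scheme \<Rightarrow> ('a \<Rightarrow> 'a) \<Rightarrow> ('a \<Rightarrow> nat) \<Rightarrow> 'a set" where
  "skew_core G \<phi> \<pi> = (\<Inter>i\<in>{1..perm_order G \<phi>}. (\<phi> ^^ i) ` skew_kernel G \<phi> \<pi>)"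

definition skew_smooth :: "('a, 'b) monoid_scheme \<Rightarrow> ('a \<Rightarrow> 'a) \<Rightarrow> ('a \<Rightarrow> nat) \<Rightarrow> 'a set" where
  "skew_smooth G \<phi> \<pi> = {x \<in> carrier G. \<phi> x \<in> x <#\<^bsub>G\<^esub> skew_core G \<phi> \<pi>}"

definition induced_skew :: "('a, 'b) monoid_scheme \<Rightarrow> ('a \<Rightarrow> 'a) \<Rightarrow> 'a set \<Rightarrow> 'a set \<Rightarrow> 'a set" where
  "induced_skew G \<phi> N = (\<lambda>C. \<phi> (SOME x. x \<in> C) <#\<^bsub>G\<^esub> N)"

definition Fix :: "('c \<Rightarrow> 'c) \<Rightarrow> 'c set" where
  "Fix \<psi> = {z. \<psi> z = z}"

end

theory Submission
  imports Defs
begin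

locale skew = group G for G :: "('a, 'b) monoid_scheme" (structure) +
  fixes \<phi> :: "'a \<Rightarrow> 'a" and \<pi> :: "'a \<Rightarrow> nat"
  assumes fin: "finite (carrier G)" and sk: "skew_morphism G \<phi> \<pi>"
begin

abbreviation "N \<equiv> perm_order G \<phi>"

lemma bij: "bij_betw \<phi> (carrier G) (carrier G)" using sk by (simp add: skew_morphism_def)
lemma phi1: "\<phi> \<one> = \<one>" using sk by (simp add: skew_morphism_def)
lemma pi_lt: "x \<in> carrier G \<Longrightarrow> \<pi> x < N" using sk by (simp add: skew_morphism_def)
lemma phimult: "x \<in> carrier G \<Longrightarrow> y \<in> carrier G \<Longrightarrow> \<phi> (x \<otimes> y) = \<phi> x \<otimes> (\<phi> ^^ \<pi> x) y"
  using sk by (simp add: skew_morphism_def)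

lemma phi_closed: "x \<in> carrier G \<Longrightarrow> \<phi> x \<in> carrier G"
  using bij by (meson bij_betw_apply)

lemma funpow_closed: "x \<in> carrier G \<Longrightarrow> (\<phi> ^^ k) x \<in> carrier G"
  by (induction k) (auto simp: phi_closed)

lemma funpow_inj: "inj_on (\<phi> ^^ k) (carrier G)"
proof (induction k)
  case 0 then show ?case by simp
next
  case (Suc k)
  have "inj_on \<phi> ((\<phi> ^^ k) ` carrier G)"
    using bij bij_betw_imp_inj_on funpow_closed inj_on_subset by (metis image_subset_iff)
  from comp_inj_on[OF Suc.IH this] show ?case by (simp add: comp_def)
qed

lemma exists_period: "\<exists>m>0. \<forall>x\<in>carrier G. (\<phi> ^^ m) x = x"
proof -
  define F where "F = (\<lambda>i::nat. restrict (\<phi> ^^ i) (carrier G))"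
  have "range F \<subseteq> carrier G \<rightarrow>\<^sub>E carrier G"
    using funpow_closed by (auto simp: F_def)
  moreover have "finite (carrier G \<rightarrow>\<^sub>E carrier G)" using fin by (simp add: finite_PiE)
  ultimately have "finite (range F)" by (rule finite_subset)
  hence "\<not> inj F" using finite_imageD by blast
  then obtain i j where ij: "i \<noteq> j" "F i = F j" unfolding inj_def by blast
  have key: "\<exists>m>0. \<forall>x\<in>carrier G. (\<phi> ^^ m) x = x" if "i < j" "F i = F j" for i j
  proof (intro exI[of _ "j - i"] conjI ballI)
    show "0 < j - i" using that by simp
    fix y assume y: "y \<in> carrier G"
    have "(\<phi> ^^ i) ((\<phi> ^^ (j - i)) y) = (\<phi> ^^ j) y"
      using that by (metis add_diff_inverse_nat comp_apply funpow_add less_imp_le not_le)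
    also have "\<dots> = (\<phi> ^^ i) y" using that y unfolding F_def by (metis restrict_apply')
    finally show "(\<phi> ^^ (j - i)) y = y"
      using funpow_inj[of i] y funpow_closed by (meson inj_onD)
  qed
  show ?thesis using ij key by (metis linorder_neqE_nat)
qed

lemma N_pos: "0 < N" and N_id: "x \<in> carrier G \<Longrightarrow> (\<phi> ^^ N) x = x"
  using LeastI_ex[OF exists_period] unfolding perm_order_def by auto

lemma N_min: "0 < d \<Longrightarrow> \<forall>x\<in>carrier G. (\<phi> ^^ d) x = x \<Longrightarrow> N \<le> d"
  unfolding perm_order_def by (rule Least_le) simp

lemma funpow_mult_N: "x \<in> carrier G \<Longrightarrow> (\<phi> ^^ (q * N)) x = x"
proof (induction q)
  case 0 then show ?case by simp
next
  case (Suc q)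
  have "(\<phi> ^^ (Suc q * N)) x = (\<phi> ^^ N) ((\<phi> ^^ (q * N)) x)"
    by (simp add: funpow_add)
  then show ?case using Suc N_id by simp
qed

lemma funpow_mod: "x \<in> carrier G \<Longrightarrow> (\<phi> ^^ m) x = (\<phi> ^^ (m mod N)) x"
proof -
  assume x: "x \<in> carrier G"
  have "(\<phi> ^^ m) x = (\<phi> ^^ (m mod N + (m div N) * N)) x" by (simp only: mod_div_mult_eq)
  also have "\<dots> = (\<phi> ^^ (m mod N)) ((\<phi> ^^ ((m div N) * N)) x)" by (simp add: funpow_add)
  also have "\<dots> = (\<phi> ^^ (m mod N)) x" using funpow_mult_N x by simp
  finally show ?thesis .
qed

lemma funpow_cong_mod: "a mod N = b mod N \<Longrightarrow> x \<in> carrier G \<Longrightarrow> (\<phi> ^^ a) x = (\<phi> ^^ b) x"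
  by (metis funpow_mod)

lemma funpow_eq_mod_aux:
  assumes "a \<le> b" "\<forall>y\<in>carrier G. (\<phi> ^^ a) y = (\<phi> ^^ b) y"
  shows "a mod N = b mod N"
proof -
  define d where "d = b - a"
  have dy: "(\<phi> ^^ d) y = y" if y: "y \<in> carrier G" for y
  proof -
    have "(\<phi> ^^ a) ((\<phi> ^^ d) y) = (\<phi> ^^ (a + d)) y" by (simp add: funpow_add)
    also have "\<dots> = (\<phi> ^^ b) y" using assms(1) d_def by simp
    also have "\<dots> = (\<phi> ^^ a) y" using assms(2) y by simp
    finally show ?thesis using funpow_inj[of a] y funpow_closed by (meson inj_onD)
  qed
  have "d mod N = 0"
  proof (rule ccontr)
    assume "d mod N \<noteq> 0"
    moreover have "\<forall>y\<in>carrier G. (\<phi> ^^ (d mod N)) y = y" using dy funpow_mod by metis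
    ultimately have "N \<le> d mod N" using N_min by blast
    thus False using N_pos by (meson mod_less_divisor not_le)
  qed
  thus ?thesis using assms(1) d_def
    by (metis add.right_neutral le_add_diff_inverse mod_add_right_eq)
qed

lemma funpow_eq_mod:
  assumes "\<forall>y\<in>carrier G. (\<phi> ^^ a) y = (\<phi> ^^ b) y"
  shows "a mod N = b mod N"
  using funpow_eq_mod_aux assms by (metis nat_le_linear)

abbreviation "sig b k \<equiv> (\<Sum>t<k. \<pi> ((\<phi> ^^ t) b))"

lemma funpow_mult:
  assumes "b \<in> carrier G" "y \<in> carrier G"
  shows "(\<phi> ^^ k) (b \<otimes> y) = (\<phi> ^^ k) b \<otimes> (\<phi> ^^ sig b k) y"
proof (induction k)
  case 0 then show ?case by simp
next
  case (Suc k)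
  have "(\<phi> ^^ Suc k) (b \<otimes> y) = \<phi> ((\<phi> ^^ k) b \<otimes> (\<phi> ^^ sig b k) y)" using Suc by simp
  also have "\<dots> = \<phi> ((\<phi> ^^ k) b) \<otimes> (\<phi> ^^ \<pi> ((\<phi> ^^ k) b)) ((\<phi> ^^ sig b k) y)"
    using phimult funpow_closed assms by blast
  also have "\<dots> = (\<phi> ^^ Suc k) b \<otimes> (\<phi> ^^ sig b (Suc k)) y"
    by (simp add: funpow_add add.commute)
  finally show ?case .
qed

lemma pi_mult:
  assumes a: "a \<in> carrier G" and b: "b \<in> carrier G"
  shows "\<pi> (a \<otimes> b) mod N = sig b (\<pi> a) mod N"
proof (rule funpow_eq_mod, intro ballI)
  fix y assume y: "y \<in> carrier G"
  have "\<phi> (a \<otimes> b \<otimes> y) = (\<phi> a \<otimes> (\<phi> ^^ \<pi> a) b) \<otimes> (\<phi> ^^ \<pi> (a \<otimes> b)) y"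
    using phimult a b y by simp
  moreover have "\<phi> (a \<otimes> b \<otimes> y) = \<phi> (a \<otimes> (b \<otimes> y))" using a b y by (simp add: m_assoc)
  moreover have "\<dots> = (\<phi> a \<otimes> (\<phi> ^^ \<pi> a) b) \<otimes> (\<phi> ^^ sig b (\<pi> a)) y"
    using phimult a b y funpow_mult funpow_closed phi_closed by (simp add: m_assoc)
  ultimately show "(\<phi> ^^ \<pi> (a \<otimes> b)) y = (\<phi> ^^ sig b (\<pi> a)) y"
    using a b y funpow_closed phi_closed by (metis l_cancel m_closed)
qed

lemma pi_one: "\<pi> \<one> mod N = 1 mod N"
proof (rule funpow_eq_mod, intro ballI)
  fix y assume y: "y \<in> carrier G"
  have "\<phi> y = \<phi> (\<one> \<otimes> y)" using y by simp
  also have "\<dots> = (\<phi> ^^ \<pi> \<one>) y" using phimult[of \<one> y] y phi1 funpow_closed[of y] by simp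
  finally show "(\<phi> ^^ \<pi> \<one>) y = (\<phi> ^^ 1) y" by simp
qed

lemma sum_mod_const:
  "(\<And>t. t < m \<Longrightarrow> f t mod N = r mod N) \<Longrightarrow> (\<Sum>t<m. f t) mod N = (m * r) mod N"
proof (induction m)
  case 0 then show ?case by simp
next
  case (Suc m)
  have "(\<Sum>t<Suc m. f t) mod N = ((\<Sum>t<m. f t) + f m) mod N" by simp
  also have "\<dots> = (m * r + r) mod N"
    by (rule mod_add_cong) (use Suc in auto)
  finally show ?case by (simp add: add.commute)
qed

definition "K = skew_kernel G \<phi> \<pi>"
definition "C = skew_core G \<phi> \<pi>"

lemma inK: "k \<in> K \<longleftrightarrow> k \<in> carrier G \<and> \<pi> k mod N = 1 mod N"
  unfolding K_def skew_kernel_def using pi_lt by auto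

lemma core_iff: "c \<in> C \<longleftrightarrow> c \<in> carrier G \<and> (\<forall>j. (\<phi> ^^ j) c \<in> K)"
proof
  assume c: "c \<in> C"
  have "N \<in> {1..N}" using N_pos by simp
  hence "c \<in> (\<phi> ^^ N) ` K" using c unfolding C_def skew_core_def K_def by blast
  then obtain k where k: "k \<in> K" "c = (\<phi> ^^ N) k" by blast
  hence cc: "c \<in> carrier G" using N_id inK by auto
  have "(\<phi> ^^ j) c \<in> K" for j
  proof -
    define i where "i = N - j mod N"
    have jl: "j mod N < N" using N_pos by simp
    hence "i \<in> {1..N}" unfolding i_def by simp
    hence "c \<in> (\<phi> ^^ i) ` K" using c unfolding C_def skew_core_def K_def by blast
    then obtain k where k: "k \<in> K" "c = (\<phi> ^^ i) k" by blast
    have "(\<phi> ^^ j) c = (\<phi> ^^ (j + i)) k" using k by (simp add: funpow_add)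
    also have "\<dots> = (\<phi> ^^ 0) k"
    proof (rule funpow_cong_mod)
      show "k \<in> carrier G" using k inK by auto
      have "(j + i) mod N = (j mod N + i) mod N" by (simp add: mod_add_left_eq)
      also have "j mod N + i = N" using jl unfolding i_def by simp
      finally show "(j + i) mod N = 0 mod N" by simp
    qed
    finally show ?thesis using k by simp
  qed
  thus "c \<in> carrier G \<and> (\<forall>j. (\<phi> ^^ j) c \<in> K)" using cc by blast
next
  assume c: "c \<in> carrier G \<and> (\<forall>j. (\<phi> ^^ j) c \<in> K)"
  have "c \<in> (\<phi> ^^ i) ` K" if "i \<in> {1..N}" for i
  proof
    have "(\<phi> ^^ i) ((\<phi> ^^ (N - i)) c) = (\<phi> ^^ (i + (N - i))) c" by (simp add: funpow_add)
    also have "\<dots> = c" using that c N_id by simp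
    finally show "c = (\<phi> ^^ i) ((\<phi> ^^ (N - i)) c)" by simp
    show "(\<phi> ^^ (N - i)) c \<in> K" using c by blast
  qed
  thus "c \<in> C" unfolding C_def skew_core_def K_def by blast
qed

lemma core_pi: "c \<in> C \<Longrightarrow> \<pi> ((\<phi> ^^ j) c) mod N = 1 mod N"
proof -
  assume "c \<in> C"
  hence "(\<phi> ^^ j) c \<in> K" using core_iff by blast
  thus ?thesis using inK by blast
qed

lemma core_sub: "C \<subseteq> carrier G" using core_iff by blast

lemma funpow_one: "(\<phi> ^^ j) \<one> = \<one>"
  by (induction j) (auto simp: phi1)

lemma one_core: "\<one> \<in> C"
  using core_iff inK funpow_one pi_one by simp

lemma core_phi: "c \<in> C \<Longrightarrow> (\<phi> ^^ m) c \<in> C"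
  using core_iff funpow_closed by (metis funpow_add comp_apply)

lemma K_mult: assumes uK: "u \<in> K" and vK: "v \<in> K" shows "u \<otimes> v \<in> K"
proof -
  have u1: "u \<in> carrier G" "\<pi> u mod N = 1 mod N" using uK inK by blast+
  have v1: "v \<in> carrier G" "\<pi> v mod N = 1 mod N" using vK inK by blast+
  have uv: "u \<otimes> v \<in> carrier G" using u1 v1 by simp
  show ?thesis
  proof (cases "N = 1")
    case True
    then show ?thesis using uv inK by simp
  next
    case False
    hence N2: "1 < N" using N_pos by simp
    have "\<pi> u < N" using pi_lt u1(1) by blast
    hence pu: "\<pi> u = 1" using u1(2) N2 by simp
    have "\<pi> (u \<otimes> v) mod N = sig v (\<pi> u) mod N" using pi_mult[OF u1(1) v1(1)] .
    also have "\<dots> = \<pi> v mod N" using pu by simp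
    finally show ?thesis using v1(2) uv inK by simp
  qed
qed

lemma core_mult: assumes c: "c \<in> C" and d: "d \<in> C" shows "c \<otimes> d \<in> C"
proof -
  have cc: "c \<in> carrier G" "d \<in> carrier G" using c d core_sub by auto
  have all: "(\<phi> ^^ j) (c \<otimes> d) \<in> K" for j
  proof -
    have "(\<phi> ^^ j) (c \<otimes> d) = (\<phi> ^^ j) c \<otimes> (\<phi> ^^ sig c j) d" using funpow_mult cc by blast
    moreover have "sig c j mod N = (j * 1) mod N"
      by (rule sum_mod_const) (rule core_pi[OF c])
    hence "sig c j mod N = j mod N" by simp
    hence "(\<phi> ^^ sig c j) d = (\<phi> ^^ j) d" using cc(2) by (rule funpow_cong_mod)
    moreover have "(\<phi> ^^ j) c \<in> K" "(\<phi> ^^ j) d \<in> K" using c d core_iff by blast+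
    ultimately show ?thesis using K_mult by simp
  qed
  have "c \<otimes> d \<in> carrier G" using cc by simp
  thus ?thesis using core_iff[of "c \<otimes> d"] all by blast
qed

lemma fin_core: "finite C" using core_sub fin finite_subset by blast

lemma core_coset: assumes c: "c \<in> C" shows "c <# C = C"
proof -
  have eq: "c <# C = (\<lambda>y. c \<otimes> y) ` C" by (auto simp: l_coset_def)
  have cc: "c \<in> carrier G" using c core_sub by blast
  have "inj_on (\<lambda>y. c \<otimes> y) C"
  proof (rule inj_onI)
    fix y z assume "y \<in> C" "z \<in> C" "c \<otimes> y = c \<otimes> z"
    thus "y = z" using cc core_sub l_cancel by blast
  qed
  hence "card ((\<lambda>y. c \<otimes> y) ` C) = card C" by (rule card_image)
  hence cardeq: "card (c <# C) = card C" using eq by simp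
  have sub: "c <# C \<subseteq> C" using eq core_mult c by auto
  show ?thesis using card_subset_eq[OF fin_core sub cardeq] .
qed

lemma lcoset_mem: "z \<in> x <# C \<longleftrightarrow> (\<exists>c\<in>C. z = x \<otimes> c)"
  by (auto simp: l_coset_def)

lemma smooth_iff: "x \<in> skew_smooth G \<phi> \<pi> \<longleftrightarrow> x \<in> carrier G \<and> \<phi> x \<in> x <# C"
  by (simp add: skew_smooth_def C_def)

lemma part_fix:
  assumes x: "x \<in> carrier G"
  shows "x \<in> skew_smooth G \<phi> \<pi> \<longleftrightarrow> x <# C \<in> Fix (induced_skew G \<phi> C)"
proof -
  have "x \<in> x <# C" using one_core x lcoset_mem by (metis r_one)
  hence "(SOME z. z \<in> x <# C) \<in> x <# C" by (rule someI)
  then obtain c where c: "c \<in> C" "(SOME z. z \<in> x <# C) = x \<otimes> c" using lcoset_mem by blast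
  have cc: "c \<in> carrier G" using c core_sub by auto
  have ind: "induced_skew G \<phi> C (x <# C) = \<phi> x <# C"
  proof -
    have "induced_skew G \<phi> C (x <# C) = \<phi> (x \<otimes> c) <# C"
      unfolding induced_skew_def using c by simp
    also have "\<dots> = (\<phi> x \<otimes> (\<phi> ^^ \<pi> x) c) <# C" using phimult x cc by simp
    also have "\<dots> = \<phi> x <# ((\<phi> ^^ \<pi> x) c <# C)"
      using lcos_m_assoc core_sub phi_closed funpow_closed x cc by simp
    also have "\<dots> = \<phi> x <# C" using core_coset core_phi c by simp
    finally show ?thesis .
  qed
  have "\<phi> x <# C = x <# C \<longleftrightarrow> \<phi> x \<in> x <# C"
  proof
    assume "\<phi> x <# C = x <# C"
    moreover have "\<phi> x \<in> \<phi> x <# C" using one_core x phi_closed lcoset_mem by (metis r_one)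
    ultimately show "\<phi> x \<in> x <# C" by simp
  next
    assume "\<phi> x \<in> x <# C"
    then obtain c0 where "c0 \<in> C" "\<phi> x = x \<otimes> c0" using lcoset_mem by blast
    thus "\<phi> x <# C = x <# C"
      using lcos_m_assoc core_sub x core_coset by (metis subsetD)
  qed
  thus ?thesis using ind smooth_iff x by (simp add: Fix_def)
qed

lemma part_smooth_imp:
  assumes x: "x \<in> carrier G" and sm: "\<phi> x \<in> x <# C"
  shows "\<pi> ((\<phi> ^^ i) x) = \<pi> x"
proof -
  obtain c0 where c0: "c0 \<in> C" "\<phi> x = x \<otimes> c0" using sm lcoset_mem by blast
  have "\<exists>c\<in>C. (\<phi> ^^ i) x = x \<otimes> c" for i
  proof (induction i)
    case 0 then show ?case using one_core x by (metis funpow_0 r_one)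
  next
    case (Suc i)
    then obtain c where c: "c \<in> C" "(\<phi> ^^ i) x = x \<otimes> c" by blast
    have cc: "c \<in> carrier G" "c0 \<in> carrier G" using c c0 core_sub by auto
    have "(\<phi> ^^ Suc i) x = \<phi> x \<otimes> (\<phi> ^^ \<pi> x) c" using c phimult x cc by simp
    also have "\<dots> = x \<otimes> (c0 \<otimes> (\<phi> ^^ \<pi> x) c)" using c0 x cc funpow_closed by (simp add: m_assoc)
    finally show ?case using core_mult core_phi c c0 by blast
  qed
  then obtain c where c: "c \<in> C" "(\<phi> ^^ i) x = x \<otimes> c" by blast
  have cc: "c \<in> carrier G" using c core_sub by auto
  have "\<pi> (x \<otimes> c) mod N = sig c (\<pi> x) mod N" using pi_mult x cc by blast
  also have "\<dots> = (\<pi> x * 1) mod N"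
    by (rule sum_mod_const) (rule core_pi[OF c(1)])
  finally have "\<pi> (x \<otimes> c) mod N = \<pi> x mod N" by simp
  moreover have "\<pi> (x \<otimes> c) < N" "\<pi> x < N" using pi_lt x cc by auto
  ultimately show ?thesis using c(2) by simp
qed

lemma part_imp_smooth:
  assumes x: "x \<in> carrier G" and inv: "\<forall>i. \<pi> ((\<phi> ^^ i) x) = \<pi> x"
  shows "\<phi> x \<in> x <# C"
proof -
  define Orb where "Orb = range (\<lambda>i. (\<phi> ^^ i) x)"
  have Orb: "u \<in> carrier G" "\<pi> u = \<pi> x" "\<phi> u \<in> Orb" "(\<phi> ^^ m) u \<in> Orb" if uO: "u \<in> Orb" for u m
  proof -
    obtain i where i: "u = (\<phi> ^^ i) x" using uO unfolding Orb_def by blast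
    show "u \<in> carrier G" using i funpow_closed x by simp
    show "\<pi> u = \<pi> x" using i inv by simp
    have "\<phi> u = (\<phi> ^^ Suc i) x" using i by simp
    thus "\<phi> u \<in> Orb" unfolding Orb_def by blast
    have "(\<phi> ^^ m) u = (\<phi> ^^ (m + i)) x" using i by (simp add: funpow_add)
    thus "(\<phi> ^^ m) u \<in> Orb" unfolding Orb_def by blast
  qed
  have key: "inv u \<otimes> \<phi> u \<in> K \<and> \<phi> (inv u \<otimes> \<phi> u) = inv ((\<phi> ^^ \<pi> (inv u)) u) \<otimes> \<phi> ((\<phi> ^^ \<pi> (inv u)) u)"
    if u: "u \<in> Orb" for u
  proof
    define q where "q = \<pi> (inv u)"
    have uc: "u \<in> carrier G" "inv u \<in> carrier G" using Orb u by auto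
    have "\<pi> (inv u \<otimes> u) mod N = sig u q mod N" using pi_mult uc q_def by blast
    also have "\<dots> = (q * \<pi> x) mod N" by (rule sum_mod_const) (simp add: Orb(2)[OF Orb(4)[OF u]])
    finally have qp: "(q * \<pi> x) mod N = 1 mod N" using pi_one uc by simp
    have "\<pi> (inv u \<otimes> \<phi> u) mod N = sig (\<phi> u) q mod N" using pi_mult uc q_def phi_closed by blast
    also have "\<dots> = (q * \<pi> x) mod N" by (rule sum_mod_const) (simp add: Orb(2)[OF Orb(4)[OF Orb(3)[OF u]]])
    finally show "inv u \<otimes> \<phi> u \<in> K" using qp inK uc phi_closed by auto
    have "\<one> = \<phi> (inv u \<otimes> u)" using uc phi1 by simp
    also have "\<dots> = \<phi> (inv u) \<otimes> (\<phi> ^^ q) u" using phimult[of "inv u" u] uc q_def by simp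
    finally have "inv ((\<phi> ^^ q) u) = \<phi> (inv u)"
      using inv_equality uc funpow_closed phi_closed by metis
    moreover have "\<phi> (inv u \<otimes> \<phi> u) = \<phi> (inv u) \<otimes> (\<phi> ^^ q) (\<phi> u)"
      using phimult uc q_def phi_closed by simp
    ultimately show "\<phi> (inv u \<otimes> \<phi> u) = inv ((\<phi> ^^ \<pi> (inv u)) u) \<otimes> \<phi> ((\<phi> ^^ \<pi> (inv u)) u)"
      by (simp add: q_def funpow_swap1)
  qed
  define c where "c = inv x \<otimes> \<phi> x"
  have xO: "x \<in> Orb" unfolding Orb_def by (metis funpow_0 rangeI)
  have "\<exists>u\<in>Orb. (\<phi> ^^ j) c = inv u \<otimes> \<phi> u" for j
  proof (induction j)
    case 0 then show ?case using xO c_def by auto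
  next
    case (Suc j)
    then obtain u where u: "u \<in> Orb" "(\<phi> ^^ j) c = inv u \<otimes> \<phi> u" by blast
    have "(\<phi> ^^ Suc j) c = inv ((\<phi> ^^ \<pi> (inv u)) u) \<otimes> \<phi> ((\<phi> ^^ \<pi> (inv u)) u)"
      using key u by simp
    thus ?case using Orb u by blast
  qed
  hence "(\<phi> ^^ j) c \<in> K" for j using key Orb by metis
  moreover have "c \<in> carrier G" using c_def x phi_closed by simp
  ultimately have "c \<in> C" using core_iff by blast
  moreover have "\<phi> x = x \<otimes> c" using c_def x phi_closed by (simp add: m_assoc[symmetric])
  ultimately show ?thesis using lcoset_mem by blast
qed

end

theorem proposition3:
  fixes G :: "('a, 'b) monoid_scheme" and \<phi> :: "'a \<Rightarrow> 'a" and \<pi> :: "'a \<Rightarrow> nat" and x :: 'a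
  assumes "group G" and "finite (carrier G)"
    and "skew_morphism G \<phi> \<pi>"
    and "x \<in> carrier G"
  shows "(x \<in> skew_smooth G \<phi> \<pi> \<longleftrightarrow> (\<forall>i::nat. \<pi> ((\<phi> ^^ i) x) = \<pi> x))
       \<and> ((\<forall>i::nat. \<pi> ((\<phi> ^^ i) x) = \<pi> x) \<longleftrightarrow>
            x <#\<^bsub>G\<^esub> skew_core G \<phi> \<pi> \<in> Fix (induced_skew G \<phi> (skew_core G \<phi> \<pi>)))"
proof -
  interpret skew G \<phi> \<pi> using assms by (simp add: skew_def skew_axioms_def)
  have 1: "x \<in> skew_smooth G \<phi> \<pi> \<longleftrightarrow> (\<forall>i::nat. \<pi> ((\<phi> ^^ i) x) = \<pi> x)"
    using part_smooth_imp part_imp_smooth smooth_iff assms(4) by blast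
  show ?thesis using 1 part_fix[OF assms(4)] unfolding C_def by blast
qed

end
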